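(* Assume $f$ is sufficiently smooth (e.g. $f$ has continuous, bounded partial derivatives up to order four on $[a,b]\times\mathbb{R}$, so that the exact solution $y$ is sufficiently smooth and $f$ is Lipschitz in $y$). Let $w_i$ be produced by the RK3GL2 method with parameter $h=(b-a)/(3N)$ and $w_0=y(a)$. Then the global error at the Gauss–Legendre block endpoints satisfies $$\Delta_{3N}=w_{3N}-y(b)=O(h^4)\qquad (h\to 0),$$ i.e. RK3GL2 has global order four, one higher than the global order three of the underlying RK3 method.
   Context: Scalar initial value problem $y'=f(x,y)$, $y(a)=y_0$, $a\le x\le b$. RK3 denotes the explicit third-order Runge–Kutta method $w\mapsto w+\eta F(x,w)$ with step $\eta$, where $\eta F(x,w)=\frac29k_1+\frac39k_2+\frac49k_3$, $k_1=\eta f(x,w)$, $k_2=\eta f(x+\eta/2,\,w+k_1/2)$, $k_3=\eta f(x+3\eta/4,\,w+3k_2/4)$. RK3GL2 method with parameter $h>0$: the interval $[a,b]$ is divided into $N$ equal subintervals $[x_{3k},x_{3k+3}]$ of length $3h$ (so $x_{3k}=a+3kh$ and $3Nh=b-a$). Inside $[x_{3k},x_{3k+3}]$ the two Gauss–Legendre nodes are $x_{3k+1}=x_{3k}+\frac{3h}{2}(1-\frac{1}{\sqrt3})$ and $x_{3k+2}=x_{3k}+\frac{3h}{2}(1+\frac{1}{\sqrt3})$. Set $h_i=x_{i+1}-x_i$. The iteration is: $w_{3k+1}=w_{3k}+h_{3k}F(x_{3k},w_{3k})$, $w_{3k+2}=w_{3k+1}+h_{3k+1}F(x_{3k+1},w_{3k+1})$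 (RK3 steps, with step $h_i$), and $w_{3k+3}=w_{3k}+\frac{3h}{2}\big[f(x_{3k+1},w_{3k+1})+f(x_{3k+2},w_{3k+2})\big]$ (two-point Gauss–Legendre step). The global error is $\Delta_i=w_i-y(x_i)$. *)

theory Defs
  imports "HOL-Analysis.Analysis"
begin

definition rk3_incr :: "(real \<Rightarrow> real \<Rightarrow> real) \<Rightarrow> real \<Rightarrow> real \<Rightarrow> real \<Rightarrow> real" where
  "rk3_incr f x w eta =
     (let k1 = eta * f x w;
          k2 = eta * f (x + eta / 2) (w + k1 / 2);
          k3 = eta * f (x + 3 * eta / 4) (w + 3 * k2 / 4)
      in 2/9 * k1 + 3/9 * k2 + 4/9 * k3)"

definition rk3gl2_block :: "(real \<Rightarrow> real \<Rightarrow> real) \<Rightarrow> real \<Rightarrow> real \<Rightarrow> real \<Rightarrow> real" where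
  "rk3gl2_block f h x w =
     (let x1 = x + 3 * h / 2 * (1 - 1 / sqrt 3);
          x2 = x + 3 * h / 2 * (1 + 1 / sqrt 3);
          w1 = w + rk3_incr f x w (x1 - x);
          w2 = w1 + rk3_incr f x1 w1 (x2 - x1)
      in w + 3 * h / 2 * (f x1 w1 + f x2 w2))"

text \<open>rk3gl2 f a h w0 k = w_{3k}, the value at the block endpoint x_{3k} = a + 3kh.\<close>
fun rk3gl2 :: "(real \<Rightarrow> real \<Rightarrow> real) \<Rightarrow> real \<Rightarrow> real \<Rightarrow> real \<Rightarrow> nat \<Rightarrow> real" where
  "rk3gl2 f a h w0 0 = w0"
| "rk3gl2 f a h w0 (Suc k) = rk3gl2_block f h (a + 3 * real k * h) (rk3gl2 f a h w0 k)"

end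

theory Submission
  imports Defs
begin



lemma decr_within:
  fixes \<psi> \<psi>' :: "real \<Rightarrow> real"
  assumes "x \<le> z" "\<And>t. t \<in> {x..z} \<Longrightarrow> (\<psi> has_real_derivative \<psi>' t) (at t within {x..z})"
    "\<And>t. t\<in>{x..z} \<Longrightarrow> \<psi>' t \<le> 0"
  shows "\<psi> z \<le> \<psi> x"
proof -
  have "continuous_on {x..z} \<psi>" using assms(2)
    by (meson DERIV_continuous continuous_on_eq_continuous_within)
  moreover have "\<exists>y. DERIV \<psi> t :> y \<and> y \<le> 0" if "x < t" "t < z" for t
    using assms(2)[of t] assms(3)[of t] that at_within_Icc_at[of x t z] by auto
  ultimately show ?thesis using DERIV_nonpos_imp_decreasing_open[OF assms(1)] by blast
qed

lemma dpow: "((\<lambda>t. (t - x)^Suc n) has_real_derivative real (Suc n) * (t - x)^n) (at t within S)"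
proof -
  have "((\<lambda>t. (t-x)^Suc n) has_real_derivative of_nat (Suc n) * ((1 - 0) * (t-x)^(Suc n - Suc 0))) (at t within S)"
    by (intro DERIV_power DERIV_diff DERIV_ident DERIV_const)
  then show ?thesis by simp
qed

lemma integ:
  fixes \<phi> \<phi>' :: "real \<Rightarrow> real"
  assumes s: "0 \<le> s" and d: "\<And>t. t\<in>{x..x+s} \<Longrightarrow> (\<phi> has_real_derivative \<phi>' t) (at t within {x..x+s})"
  and b: "\<And>t. t \<in> {x..x+s} \<Longrightarrow> \<bar>\<phi>' t\<bar> \<le> M * (t-x)^n / fact n" and z: "\<phi> x = 0"
  shows "\<bar>\<phi> (x+s)\<bar> \<le> M * s^(Suc n) / fact (Suc n)"
proof -
  have dp: "((\<lambda>t. M * (t-x)^(Suc n) / fact (Suc n)) has_real_derivative M * (t-x)^n / fact n) (at t within {x..x+s})" for t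
  proof -
    note h = dpow[of x n t "{x..x+s}"]
    have "((\<lambda>t. M * (t-x)^(Suc n) / fact (Suc n)) has_real_derivative M * (real (Suc n) * (t-x)^n) / fact (Suc n)) (at t within {x..x+s})"
      by (intro DERIV_cdivide DERIV_cmult h)
    moreover have "M * (real (Suc n) * (t-x)^n) / fact (Suc n) = M * (t-x)^n / fact n"
      by (simp add: fact_Suc field_simps del: of_nat_Suc)
    ultimately show ?thesis by simp
  qed
  have 1: "(\<lambda>t. \<phi> t - M * (t-x)^(Suc n) / fact (Suc n)) (x+s) \<le> (\<lambda>t. \<phi> t - M * (t-x)^(Suc n) / fact (Suc n)) x"
    apply (rule decr_within[where \<psi>'="\<lambda>t. \<phi>' t - M * (t-x)^n / fact n" and x=x and z="x+s"])
    using s apply simp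
     apply (rule DERIV_diff[OF d dp]) apply simp
    using b by fastforce
  have 2: "(\<lambda>t. - \<phi> t - M * (t-x)^(Suc n) / fact (Suc n)) (x+s) \<le> (\<lambda>t. - \<phi> t - M * (t-x)^(Suc n) / fact (Suc n)) x"
    apply (rule decr_within[where \<psi>'="\<lambda>t. - \<phi>' t - M * (t-x)^n / fact n" and x=x and z="x+s"])
    using s apply simp
     apply (rule DERIV_diff[OF DERIV_minus[OF d] dp]) apply simp
    using b by fastforce
  show ?thesis using 1 2 z by simp
qed

lemma taylor_within:
  fixes g :: "nat \<Rightarrow> real \<Rightarrow> real"
  assumes "0 \<le> s" "\<And>m t. m < n \<Longrightarrow> t \<in> {x..x+s} \<Longrightarrow> (g m has_real_derivative g (Suc m) t) (at t within {x..x+s})"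
    "\<And>t. t \<in> {x..x+s} \<Longrightarrow> \<bar>g n t\<bar> \<le> M"
  shows "\<bar>g 0 (x+s) - (\<Sum>m<n. g m x * s^m / fact m)\<bar> \<le> M * s^n / fact n"
  using assms
proof (induction n arbitrary: g s)
  case 0
  then show ?case by simp
next
  case (Suc n)
  define \<phi> where "\<phi> t = g 0 t - (\<Sum>m<Suc n. g m x * (t-x)^m / fact m)" for t
  define \<phi>' where "\<phi>' t = g (Suc 0) t - (\<Sum>m<n. g (Suc m) x * (t-x)^m / fact m)" for t
  have IH: "\<bar>\<phi>' t\<bar> \<le> M * (t-x)^n / fact n" if t: "t \<in> {x..x+s}" for t
  proof -
    have "\<bar>g (Suc 0) (x+(t-x)) - (\<Sum>m<n. g (Suc m) x * (t-x)^m / fact m)\<bar> \<le> M * (t-x)^n / fact n"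
    proof (rule Suc.IH[where g="\<lambda>m. g (Suc m)"])
      show "0 \<le> t - x" using t by simp
      fix m t' assume m: "m < n" and t': "t' \<in> {x..x+(t-x)}"
      have "{x..x+(t-x)} \<subseteq> {x..x+s}" using t by auto
      then show "(g (Suc m) has_real_derivative g (Suc (Suc m)) t') (at t' within {x..x + (t - x)})"
        using Suc.prems(2)[of "Suc m" t'] m t' by (auto intro: DERIV_subset)
    next
      fix t' assume t': "t' \<in> {x..x+(t-x)}"
      then show "\<bar>g (Suc n) t'\<bar> \<le> M" using Suc.prems(3) t by auto
    qed
    then show ?thesis by (simp add: \<phi>'_def)
  qed
  have D: "(\<phi> has_real_derivative \<phi>' t) (at t within {x..x+s})" if t: "t \<in> {x..x+s}" for t
  proof -
    have e: "(\<lambda>t. \<Sum>m<Suc n. g m x * (t-x)^m / fact m) = (\<lambda>t. g 0 x + (\<Sum>m<n. g (Suc m) x * (t-x)^(Suc m) / fact (Suc m)))"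
      by (rule ext, subst sum.lessThan_Suc_shift, simp)
    have 1: "((\<lambda>t. \<Sum>m<n. g (Suc m) x * (t-x)^(Suc m) / fact (Suc m)) has_real_derivative
          (\<Sum>m<n. g (Suc m) x * (real (Suc m) * (t-x)^m) / fact (Suc m))) (at t within {x..x+s})"
      by (intro DERIV_sum DERIV_cdivide DERIV_cmult dpow)
    have 2: "(\<Sum>m<n. g (Suc m) x * (real (Suc m) * (t-x)^m) / fact (Suc m)) = (\<Sum>m<n. g (Suc m) x * (t-x)^m / fact m)"
      by (intro sum.cong refl) (simp add: fact_Suc field_simps del: of_nat_Suc)
    from 1 have 3: "((\<lambda>t. \<Sum>m<n. g (Suc m) x * (t-x)^(Suc m) / fact (Suc m)) has_real_derivative
          (\<Sum>m<n. g (Suc m) x * (t-x)^m / fact m)) (at t within {x..x+s})" unfolding 2 .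
    have "((\<lambda>t. \<Sum>m<Suc n. g m x * (t-x)^m / fact m) has_real_derivative 0 + (\<Sum>m<n. g (Suc m) x * (t-x)^m / fact m)) (at t within {x..x+s})"
      unfolding e by (rule DERIV_add[OF DERIV_const 3])
    moreover have "(g 0 has_real_derivative g (Suc 0) t) (at t within {x..x+s})" using Suc.prems(2)[of 0 t] t by simp
    ultimately show ?thesis unfolding \<phi>_def[abs_def] \<phi>'_def by (intro DERIV_diff) auto
  qed
  have z: "\<phi> x = 0" by (simp add: \<phi>_def sum.lessThan_Suc_shift)
  have "\<bar>\<phi> (x+s)\<bar> \<le> M * s^(Suc n) / fact (Suc n)"
    by (rule integ[OF Suc.prems(1) D IH z])
  then show ?case by (simp add: \<phi>_def)
qed

lemma taylor_at:
  fixes g :: "nat \<Rightarrow> real \<Rightarrow> real"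
  assumes d: "\<And>m t. m < n \<Longrightarrow> (g m has_real_derivative g (Suc m) t) (at t)"
    and b: "\<And>t. \<bar>g n t\<bar> \<le> M"
  shows "\<bar>g 0 (v+q) - (\<Sum>m<n. g m v * q^m / fact m)\<bar> \<le> M * \<bar>q\<bar>^n / fact n"
proof (cases "q \<ge> 0")
  case True
  show ?thesis using taylor_within[where s=q and n=n and g=g and x=v and M=M] True d b by (auto intro: has_field_derivative_at_within)
next
  case False
  define g' where "g' m t = (-1)^m * g m (v - (t - v))" for m t
  have "\<bar>g' 0 (v+(-q)) - (\<Sum>m<n. g' m v * (-q)^m / fact m)\<bar> \<le> M * (-q)^n / fact n"
  proof (rule taylor_within)
    show "0 \<le> -q" using False by simp
    fix m t assume m: "m < n"
    have "((\<lambda>t. (-1)^m * g m (v - (t - v))) has_real_derivative (-1)^m * (g (Suc m) (v - (t-v)) * (0 - (1 - 0)))) (at t)"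
      by (intro DERIV_cmult DERIV_chain2[OF d[OF m]]) (auto intro!: derivative_eq_intros)
    then show "(g' m has_real_derivative g' (Suc m) t) (at t within {v..v + - q})"
      unfolding g'_def[abs_def] by (auto intro: has_field_derivative_at_within)
  next
    fix t show "\<bar>g' n t\<bar> \<le> M" using b by (simp add: g'_def abs_mult)
  qed
  moreover have "(\<Sum>m<n. g' m v * (-q)^m / fact m) = (\<Sum>m<n. g m v * q^m / fact m)"
    by (intro sum.cong refl) (simp add: g'_def power_minus')
  ultimately show ?thesis using False by (simp add: g'_def)
qed




lemma chain_within:
  fixes \<phi> \<phi>x \<phi>u :: "real \<Rightarrow> real \<Rightarrow> real" and z :: "real \<Rightarrow> real" and S :: "real set"
  assumes dx: "\<And>t u. t \<in> S \<Longrightarrow> ((\<lambda>s. \<phi> s u) has_real_derivative \<phi>x t u) (at t within S)"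
  and du: "\<And>u. (\<phi> t has_real_derivative \<phi>u t u) (at u)"
  and cont: "continuous_on (S \<times> UNIV) (\<lambda>p. \<phi>x (fst p) (snd p))"
  and cv: "convex S"
  and dz: "(z has_real_derivative z') (at t within S)" and tS: "t \<in> S"
  shows "((\<lambda>s. \<phi> s (z s)) has_real_derivative (\<phi>x t (z t) + \<phi>u t (z t) * z')) (at t within S)"
proof -
  define A where "A s = \<phi> s (z s) - \<phi> t (z s)" for s
  have B: "((\<lambda>s. \<phi> t (z s)) has_real_derivative \<phi>u t (z t) * z') (at t within S)"
    by (rule DERIV_chain2[OF du dz])
  have zc: "continuous (at t within S) z" using dz by (rule DERIV_continuous)
  have "(A has_derivative (*) (\<phi>x t (z t))) (at t within S)"
    unfolding has_derivative_within_alt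
  proof (intro conjI allI impI)
    show "bounded_linear ((*) (\<phi>x t (z t)))" by (rule bounded_linear_mult_right)
    fix e :: real assume e: "e > 0"
    have "continuous (at (t, z t) within S \<times> UNIV) (\<lambda>p. \<phi>x (fst p) (snd p))"
      using cont tS by (simp add: continuous_on_eq_continuous_within)
    then obtain d1 where d1: "d1 > 0" and d1p: "\<And>p. p \<in> S \<times> UNIV \<Longrightarrow> dist p (t, z t) < d1 \<Longrightarrow>
        dist (\<phi>x (fst p) (snd p)) (\<phi>x t (z t)) < e"
      unfolding continuous_within_eps_delta using e by fastforce
    obtain d2 where d2: "d2 > 0" and d2p: "\<And>s. s \<in> S \<Longrightarrow> dist s t < d2 \<Longrightarrow> dist (z s) (z t) < d1/2"
      using zc d1 unfolding continuous_within_eps_delta by (meson half_gt_zero)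
    show "\<exists>d>0. \<forall>s\<in>S. norm (s - t) < d \<longrightarrow> norm (A s - A t - \<phi>x t (z t) * (s - t)) \<le> e * norm (s - t)"
    proof (intro exI[of _ "min d2 (d1/2)"] conjI ballI impI)
      show "min d2 (d1/2) > 0" using d1 d2 by simp
      fix s assume sS: "s \<in> S" and sd: "norm (s - t) < min d2 (d1/2)"
      define w where "w = z s"
      have wz: "\<bar>w - z t\<bar> < d1/2" using d2p[OF sS] sd by (simp add: w_def dist_norm)
      define I where "I = closed_segment t s"
      have IS: "I \<subseteq> S" using cv tS sS by (simp add: I_def closed_segment_subset)
      have "norm ((\<lambda>\<xi>. \<phi> \<xi> w - \<xi> * \<phi>x t (z t)) s - (\<lambda>\<xi>. \<phi> \<xi> w - \<xi> * \<phi>x t (z t)) t) \<le> e * norm (s - t)"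
      proof (rule field_differentiable_bound[where f'="\<lambda>\<xi>. \<phi>x \<xi> w - \<phi>x t (z t)"])
        show "convex I" by (simp add: I_def)
        show "s \<in> I" "t \<in> I" by (auto simp: I_def)
        fix \<xi> assume xi: "\<xi> \<in> I"
        have "((\<lambda>\<xi>. \<phi> \<xi> w) has_real_derivative \<phi>x \<xi> w) (at \<xi> within I)"
          using dx[of \<xi> w] xi IS by (auto intro: DERIV_subset)
        then show "((\<lambda>\<xi>. \<phi> \<xi> w - \<xi> * \<phi>x t (z t)) has_field_derivative \<phi>x \<xi> w - \<phi>x t (z t)) (at \<xi> within I)"
          by (auto intro!: derivative_eq_intros)
        have xt: "\<bar>\<xi> - t\<bar> \<le> \<bar>s - t\<bar>" using xi unfolding I_def
          by (metis dist_commute dist_in_closed_segment dist_real_def)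
        have "dist (\<xi>, w) (t, z t) \<le> \<bar>\<xi> - t\<bar> + \<bar>w - z t\<bar>"
          unfolding dist_Pair_Pair dist_real_def using sqrt_sum_squares_le_sum_abs[of "\<xi> - t" "w - z t"] by simp
        also have "\<dots> < d1" using xt sd wz by simp
        finally have "dist (\<phi>x \<xi> w) (\<phi>x t (z t)) < e" using d1p[of "(\<xi>, w)"] xi IS by auto
        then show "norm (\<phi>x \<xi> w - \<phi>x t (z t)) \<le> e" by (simp add: dist_norm)
      qed
      then show "norm (A s - A t - \<phi>x t (z t) * (s - t)) \<le> e * norm (s - t)"
        by (simp add: A_def w_def algebra_simps)
    qed
  qed
  then have A': "(A has_real_derivative \<phi>x t (z t)) (at t within S)"
    by (simp add: has_field_derivative_def)
  have "((\<lambda>s. A s + \<phi> t (z s)) has_real_derivative (\<phi>x t (z t) + \<phi>u t (z t) * z')) (at t within S)"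
    by (rule DERIV_add[OF A' B])
  then show ?thesis by (simp add: A_def)
qed




datatype ex = V nat nat | Ad ex ex | Mu ex ex

fun ev :: "(nat \<Rightarrow> nat \<Rightarrow> real \<Rightarrow> real \<Rightarrow> real) \<Rightarrow> ex \<Rightarrow> real \<Rightarrow> real \<Rightarrow> real" where
  "ev D (V i j) x u = D i j x u"
| "ev D (Ad e1 e2) x u = ev D e1 x u + ev D e2 x u"
| "ev D (Mu e1 e2) x u = ev D e1 x u * ev D e2 x u"

fun ordx :: "ex \<Rightarrow> nat" where
  "ordx (V i j) = i + j"
| "ordx (Ad e1 e2) = max (ordx e1) (ordx e2)"
| "ordx (Mu e1 e2) = max (ordx e1) (ordx e2)"

fun dX :: "ex \<Rightarrow> ex" where
  "dX (V i j) = V (Suc i) j"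
| "dX (Ad e1 e2) = Ad (dX e1) (dX e2)"
| "dX (Mu e1 e2) = Ad (Mu (dX e1) e2) (Mu e1 (dX e2))"

fun dU :: "ex \<Rightarrow> ex" where
  "dU (V i j) = V i (Suc j)"
| "dU (Ad e1 e2) = Ad (dU e1) (dU e2)"
| "dU (Mu e1 e2) = Ad (Mu (dU e1) e2) (Mu e1 (dU e2))"

definition tot :: "ex \<Rightarrow> ex" where "tot e = Ad (dX e) (Mu (dU e) (V 0 0))"

fun bnd :: "real \<Rightarrow> ex \<Rightarrow> real" where
  "bnd M (V i j) = M"
| "bnd M (Ad e1 e2) = bnd M e1 + bnd M e2"
| "bnd M (Mu e1 e2) = bnd M e1 * bnd M e2"

lemma ord_dX[simp]: "ordx (dX e) = Suc (ordx e)" by (induction e) auto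
lemma ord_dU[simp]: "ordx (dU e) = Suc (ordx e)" by (induction e) auto
lemma ord_tot[simp]: "ordx (tot e) = Suc (ordx e)" by (simp add: tot_def)
lemma ord_totn: "ordx ((tot ^^ k) (V 0 0)) = k" by (induction k) auto
lemma bnd_nonneg: "M \<ge> 0 \<Longrightarrow> bnd M e \<ge> 0" by (induction e) auto

locale rkloc =
  fixes f :: "real \<Rightarrow> real \<Rightarrow> real" and y :: "real \<Rightarrow> real" and a b :: real
    and D :: "nat \<Rightarrow> nat \<Rightarrow> real \<Rightarrow> real \<Rightarrow> real"
  assumes ab: "a < b"
    and D00: "\<And>x u. D 0 0 x u = f x u"
    and Dx: "\<And>i j x u. i + j < 4 \<Longrightarrow> x \<in> {a..b} \<Longrightarrow>
               ((\<lambda>t. D i j t u) has_real_derivative D (Suc i) j x u) (at x within {a..b})"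
    and Du: "\<And>i j x u. i + j < 4 \<Longrightarrow> x \<in> {a..b} \<Longrightarrow>
               ((\<lambda>s. D i j x s) has_real_derivative D i (Suc j) x u) (at u)"
    and Dcont: "\<And>i j. i + j \<le> 4 \<Longrightarrow>
               continuous_on ({a..b} \<times> UNIV) (\<lambda>p. D i j (fst p) (snd p))"
    and Dbdd: "\<And>i j. i + j \<le> 4 \<Longrightarrow> \<exists>M. \<forall>x\<in>{a..b}. \<forall>u. \<bar>D i j x u\<bar> \<le> M"
    and sol: "\<And>x. x \<in> {a..b} \<Longrightarrow> (y has_real_derivative f x (y x)) (at x within {a..b})"
begin

lemma MM_ex: "\<exists>M\<ge>1. \<forall>i j. i + j \<le> 4 \<longrightarrow> (\<forall>x\<in>{a..b}. \<forall>u. \<bar>D i j x u\<bar> \<le> M)"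
proof -
  define Mf where "Mf i j = (SOME M. \<forall>x\<in>{a..b}. \<forall>u. \<bar>D i j x u\<bar> \<le> M)" for i j
  have Mf: "\<forall>x\<in>{a..b}. \<forall>u. \<bar>D i j x u\<bar> \<le> Mf i j" if "i + j \<le> 4" for i j
    unfolding Mf_def using someI_ex[OF Dbdd[OF that]] .
  define G where "G = 1 + (\<Sum>i\<le>4. \<Sum>j\<le>4. \<bar>Mf i j\<bar>)"
  have le: "\<bar>Mf i j\<bar> \<le> (\<Sum>i\<le>4. \<Sum>j\<le>4. \<bar>Mf i j\<bar>)" if "i + j \<le> 4" for i j
  proof -
    have "\<bar>Mf i j\<bar> \<le> (\<Sum>j\<le>4. \<bar>Mf i j\<bar>)"
      by (rule member_le_sum[where f="\<lambda>j. \<bar>Mf i j\<bar>"]) (use that in auto)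
    also have "\<dots> \<le> (\<Sum>i\<le>4. \<Sum>j\<le>4. \<bar>Mf i j\<bar>)"
      by (rule member_le_sum[where f="\<lambda>i. \<Sum>j\<le>4. \<bar>Mf i j\<bar>"]) (use that in \<open>auto intro: sum_nonneg\<close>)
    finally show ?thesis .
  qed
  have "G \<ge> 1" unfolding G_def by (auto intro!: sum_nonneg)
  moreover have "\<forall>i j. i + j \<le> 4 \<longrightarrow> (\<forall>x\<in>{a..b}. \<forall>u. \<bar>D i j x u\<bar> \<le> G)"
  proof (intro allI impI ballI)
    fix i j :: nat and x u :: real assume ij: "i + j \<le> 4" and x: "x \<in> {a..b}"
    have "\<bar>D i j x u\<bar> \<le> Mf i j" using Mf[OF ij] x by blast
    also have "\<dots> \<le> \<bar>Mf i j\<bar>" by simp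
    also have "\<dots> \<le> (\<Sum>i\<le>4. \<Sum>j\<le>4. \<bar>Mf i j\<bar>)" by (rule le[OF ij])
    also have "\<dots> \<le> G" unfolding G_def by simp
    finally show "\<bar>D i j x u\<bar> \<le> G" .
  qed
  ultimately show ?thesis by blast
qed

definition "MM = (SOME M. M \<ge> 1 \<and> (\<forall>i j. i + j \<le> 4 \<longrightarrow> (\<forall>x\<in>{a..b}. \<forall>u. \<bar>D i j x u\<bar> \<le> M)))"

lemma MM: "MM \<ge> 1" "i + j \<le> 4 \<Longrightarrow> x \<in> {a..b} \<Longrightarrow> \<bar>D i j x u\<bar> \<le> MM"
  using someI_ex[OF MM_ex] unfolding MM_def by blast+

lemma ev_dx: "ordx e < 4 \<Longrightarrow> x \<in> {a..b} \<Longrightarrow> ((\<lambda>t. ev D e t u) has_real_derivative ev D (dX e) x u) (at x within {a..b})"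
  by (induction e) (auto intro!: derivative_eq_intros Dx)

lemma ev_fun: "ev D (V i j) x = D i j x" "ev D (Ad e1 e2) x = (\<lambda>u. ev D e1 x u + ev D e2 x u)"
   "ev D (Mu e1 e2) x = (\<lambda>u. ev D e1 x u * ev D e2 x u)" by (auto simp: fun_eq_iff)

lemma ev_du: "ordx e < 4 \<Longrightarrow> x \<in> {a..b} \<Longrightarrow> ((\<lambda>s. ev D e x s) has_real_derivative ev D (dU e) x u) (at u)"
  by (induction e arbitrary: u) (auto intro!: derivative_eq_intros Du simp: ev_fun)

lemma ev_cont: "ordx e \<le> 4 \<Longrightarrow> continuous_on ({a..b} \<times> UNIV) (\<lambda>p. ev D e (fst p) (snd p))"
  by (induction e) (auto intro!: continuous_on_add continuous_on_mult Dcont)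

lemma ev_bnd: "ordx e \<le> 4 \<Longrightarrow> x \<in> {a..b} \<Longrightarrow> \<bar>ev D e x u\<bar> \<le> bnd MM e"
proof (induction e)
  case (V i j) then show ?case using MM by simp
next
  case (Ad e1 e2) then show ?case by (auto intro: order_trans[OF abs_triangle_ineq])
next
  case (Mu e1 e2)
  then have 1: "\<bar>ev D e1 x u\<bar> \<le> bnd MM e1" "\<bar>ev D e2 x u\<bar> \<le> bnd MM e2" by auto
  have "bnd MM e1 \<ge> 0" using bnd_nonneg MM(1) by simp
  then show ?case using 1 by (simp add: abs_mult mult_mono)
qed

lemma ev_y: "ordx e < 4 \<Longrightarrow> t \<in> {a..b} \<Longrightarrow>
   ((\<lambda>s. ev D e s (y s)) has_real_derivative ev D (tot e) t (y t)) (at t within {a..b})"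
proof -
  assume o: "ordx e < 4" and t: "t \<in> {a..b}"
  have "((\<lambda>s. ev D e s (y s)) has_real_derivative (ev D (dX e) t (y t) + ev D (dU e) t (y t) * f t (y t))) (at t within {a..b})"
    by (rule chain_within[OF ev_dx ev_du ev_cont _ sol]) (use o t in auto)
  then show ?thesis by (simp add: tot_def D00)
qed

definition Y :: "nat \<Rightarrow> real \<Rightarrow> real" where
  "Y m t = (if m = 0 then y t else ev D ((tot ^^ (m - 1)) (V 0 0)) t (y t))"

lemma Y0: "Y 0 = y" by (simp add: Y_def fun_eq_iff)
lemma Y1: "Y 1 t = f t (y t)" by (simp add: Y_def D00)

lemma Y_deriv: "m \<le> 4 \<Longrightarrow> t \<in> {a..b} \<Longrightarrow> (Y m has_real_derivative Y (Suc m) t) (at t within {a..b})"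
proof (cases m)
  case 0 assume t: "t \<in> {a..b}"
  then show ?thesis using sol[OF t] 0 Y1 by (simp add: Y0)
next
  case (Suc k) assume "m \<le> 4" "t \<in> {a..b}"
  then show ?thesis using ev_y[of "(tot ^^ k) (V 0 0)" t] Suc
    by (simp add: Y_def[abs_def] ord_totn)
qed

lemma Y_bnd: "\<exists>M. \<forall>t\<in>{a..b}. \<bar>Y m t\<bar> \<le> M" if m1: "1 \<le> m" and m5: "m \<le> 5"
proof -
  obtain k where k: "m = Suc k" using m1 by (cases m) auto
  then have "k \<le> 4" using m5 by simp
  show ?thesis using ev_bnd[of "(tot ^^ k) (V 0 0)"] k \<open>k \<le> 4\<close>
    by (intro exI[of _ "bnd MM ((tot^^k)(V 0 0))"]) (auto simp: Y_def ord_totn)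
qed

end



lemma bm: "\<bar>x\<bar> \<le> X \<Longrightarrow> \<bar>y\<bar> \<le> Y \<Longrightarrow> \<bar>x*y\<bar> \<le> X*(Y::real)"
  by (simp add: abs_mult mult_mono')
lemma ba: "\<bar>x\<bar> \<le> X \<Longrightarrow> \<bar>y\<bar> \<le> Y \<Longrightarrow> \<bar>x+y\<bar> \<le> X+(Y::real)" by simp
lemma bs: "\<bar>x\<bar> \<le> X \<Longrightarrow> \<bar>y\<bar> \<le> Y \<Longrightarrow> \<bar>x-y\<bar> \<le> X+(Y::real)" by simp
lemma bp: "\<bar>x\<bar> \<le> X \<Longrightarrow> \<bar>x^n\<bar> \<le> (X::real)^n"
  by (simp add: power_abs power_mono)

context rkloc begin

lemma f_eq: "f x u = D 0 0 x u" using D00 by simp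

lemma taylor_Y:
  assumes x: "a \<le> x" and s: "0 \<le> s" "x + s \<le> b" and kn: "k + n \<le> 5"
    and M: "\<And>t. t \<in> {a..b} \<Longrightarrow> \<bar>Y (k+n) t\<bar> \<le> M"
  shows "\<bar>Y k (x+s) - (\<Sum>m<n. Y (k+m) x * s^m / fact m)\<bar> \<le> M * s^n / fact n"
proof -
  have "\<bar>(\<lambda>m. Y (k+m)) 0 (x+s) - (\<Sum>m<n. (\<lambda>m. Y (k+m)) m x * s^m / fact m)\<bar> \<le> M * s^n / fact n"
  proof (rule taylor_within[OF s(1)])
    fix m t assume m: "m < n" and t: "t \<in> {x..x+s}"
    then have "t \<in> {a..b}" using x s by auto
    then have "(Y (k+m) has_real_derivative Y (Suc (k+m)) t) (at t within {a..b})"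
      using Y_deriv[of "k+m" t] m kn by simp
    moreover have "{x..x+s} \<subseteq> {a..b}" using x s by auto
    ultimately show "((\<lambda>m. Y (k+m)) m has_real_derivative (\<lambda>m. Y (k+m)) (Suc m) t) (at t within {x..x+s})"
      by (auto intro: DERIV_subset)
  next
    fix t assume "t \<in> {x..x+s}" then show "\<bar>(\<lambda>m. Y (k+m)) n t\<bar> \<le> M" using M x s by auto
  qed
  then show ?thesis by simp
qed

lemma taylor_Dx:
  assumes x: "a \<le> x" and p: "0 \<le> p" "x + p \<le> b" and ijn: "i + j + n \<le> 4"
  shows "\<bar>D i j (x+p) u - (\<Sum>m<n. D (i+m) j x u * p^m / fact m)\<bar> \<le> MM * p^n / fact n"
proof -
  have "\<bar>(\<lambda>m t. D (i+m) j t u) 0 (x+p) - (\<Sum>m<n. (\<lambda>m t. D (i+m) j t u) m x * p^m / fact m)\<bar> \<le> MM * p^n / fact n"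
  proof (rule taylor_within[OF p(1)])
    fix m t assume m: "m < n" and t: "t \<in> {x..x+p}"
    then have "t \<in> {a..b}" using x p by auto
    then have "((\<lambda>t. D (i+m) j t u) has_real_derivative D (Suc (i+m)) j t u) (at t within {a..b})"
      using Dx[of "i+m" j t u] m ijn by simp
    moreover have "{x..x+p} \<subseteq> {a..b}" using x p by auto
    ultimately show "((\<lambda>m t. D (i+m) j t u) m has_real_derivative (\<lambda>m t. D (i+m) j t u) (Suc m) t) (at t within {x..x+p})"
      by (auto intro: DERIV_subset)
  next
    fix t assume "t \<in> {x..x+p}" then show "\<bar>(\<lambda>m t. D (i+m) j t u) n t\<bar> \<le> MM" using MM(2)[of "i+n" j t u] x p ijn by auto
  qed
  then show ?thesis by simp
qed

lemma taylor_Du: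
  assumes x: "x \<in> {a..b}" and ijn: "i + j + n \<le> 4"
  shows "\<bar>D i j x (v+q) - (\<Sum>m<n. D i (j+m) x v * q^m / fact m)\<bar> \<le> MM * \<bar>q\<bar>^n / fact n"
proof -
  have "\<bar>(\<lambda>m. D i (j+m) x) 0 (v+q) - (\<Sum>m<n. (\<lambda>m. D i (j+m) x) m v * q^m / fact m)\<bar> \<le> MM * \<bar>q\<bar>^n / fact n"
  proof (rule taylor_at)
    fix m t assume m: "m < n"
    show "((\<lambda>m. D i (j+m) x) m has_real_derivative (\<lambda>m. D i (j+m) x) (Suc m) t) (at t)"
      using Du[of i "j+m" x t] m ijn x by simp
  next
    fix t show "\<bar>(\<lambda>m. D i (j+m) x) n t\<bar> \<le> MM" using MM(2)[of i "j+n" x t] x ijn by auto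
  qed
  then show ?thesis by simp
qed

lemma lipD: "x \<in> {a..b} \<Longrightarrow> \<bar>D 0 0 x u - D 0 0 x w\<bar> \<le> MM * \<bar>u - w\<bar>"
  using taylor_Du[of x 0 0 1 w "u - w"] by simp

definition Tf where "Tf x v p q = D 0 0 x v + p * D 1 0 x v + q * D 0 1 x v
   + (p^2 * D 2 0 x v + 2 * p * q * D 1 1 x v + q^2 * D 0 2 x v) / 2"

lemma T2D:
  assumes x: "a \<le> x" and p: "0 \<le> p" "x + p \<le> b"
  shows "\<bar>D 0 0 (x+p) (v+q) - Tf x v p q\<bar> \<le> MM * (p + \<bar>q\<bar>)^3"
proof -
  have xab: "x \<in> {a..b}" using x p by auto
  have A: "\<bar>D 0 0 (x+p) (v+q) - (D 0 0 x (v+q) + D 1 0 x (v+q) * p + D 2 0 x (v+q) * p^2/2)\<bar> \<le> MM * p^3 / 6"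
    using taylor_Dx[OF x p, of 0 0 3 "v+q"] by (simp add: eval_nat_numeral)
  have B: "\<bar>D 0 0 x (v+q) - (D 0 0 x v + D 0 1 x v * q + D 0 2 x v * q^2/2)\<bar> \<le> MM * \<bar>q\<bar>^3 / 6"
    using taylor_Du[OF xab, of 0 0 3 v q] by (simp add: eval_nat_numeral)
  have C1: "\<bar>D 1 0 x (v+q) - (D 1 0 x v + D 1 1 x v * q)\<bar> \<le> MM * \<bar>q\<bar>^2 / 2"
    using taylor_Du[OF xab, of 1 0 2 v q] by (simp add: eval_nat_numeral)
  have C2: "\<bar>D 2 0 x (v+q) - D 2 0 x v\<bar> \<le> MM * \<bar>q\<bar>"
    using taylor_Du[OF xab, of 2 0 1 v q] by simp
  define a1 where "a1 = D 0 0 (x+p) (v+q) - (D 0 0 x (v+q) + D 1 0 x (v+q) * p + D 2 0 x (v+q) * p^2/2)"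
  define b1 where "b1 = D 0 0 x (v+q) - (D 0 0 x v + D 0 1 x v * q + D 0 2 x v * q^2/2)"
  define c1 where "c1 = D 1 0 x (v+q) - (D 1 0 x v + D 1 1 x v * q)"
  define c2 where "c2 = D 2 0 x (v+q) - D 2 0 x v"
  have eq: "D 0 0 (x+p) (v+q) - Tf x v p q = a1 + b1 + p * c1 + p^2/2 * c2"
    unfolding a1_def b1_def c1_def c2_def Tf_def by (simp add: algebra_simps power2_eq_square)
  have "\<bar>a1 + b1 + p * c1 + p^2/2 * c2\<bar> \<le> \<bar>a1\<bar> + \<bar>b1\<bar> + p * \<bar>c1\<bar> + p^2/2 * \<bar>c2\<bar>"
    using p by (simp add: abs_mult order_trans[OF abs_triangle_ineq])
  also have "\<dots> \<le> MM * p^3 / 6 + MM * \<bar>q\<bar>^3 / 6 + p * (MM * \<bar>q\<bar>^2 / 2) + p^2/2 * (MM * \<bar>q\<bar>)"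
    using A B C1 C2 p unfolding a1_def b1_def c1_def c2_def
    by (intro add_mono mult_left_mono) auto
  also have "\<dots> \<le> MM * (p + \<bar>q\<bar>)^3"
  proof -
    have m0: "MM \<ge> 0" using MM(1) by simp
    have l: "MM * p^3 / 6 + MM * \<bar>q\<bar>^3 / 6 + p * (MM * \<bar>q\<bar>^2 / 2) + p^2/2 * (MM * \<bar>q\<bar>)
       = MM*p^3/6 + MM*\<bar>q\<bar>^3/6 + MM*(p*\<bar>q\<bar>^2)/2 + MM*(p^2*\<bar>q\<bar>)/2" by (simp add: algebra_simps)
    have r: "MM * (p + \<bar>q\<bar>)^3 = MM*p^3 + MM*\<bar>q\<bar>^3 + 3*(MM*(p*\<bar>q\<bar>^2)) + 3*(MM*(p^2*\<bar>q\<bar>))"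
      by (simp add: power3_eq_cube power2_eq_square algebra_simps)
    have "0 \<le> MM*p^3" "0 \<le> MM*\<bar>q\<bar>^3" "0 \<le> MM*(p*\<bar>q\<bar>^2)" "0 \<le> MM*(p^2*\<bar>q\<bar>)"
      using p m0 by auto
    then show ?thesis unfolding l r by linarith
  qed
  finally show ?thesis using eq by simp
qed

end



context rkloc begin

lemma Y2: "Y 2 t = D 1 0 t (y t) + D 0 1 t (y t) * D 0 0 t (y t)"
  by (simp add: Y_def tot_def eval_nat_numeral)

lemma Y3: "Y 3 t = D 2 0 t (y t) + 2 * D 1 1 t (y t) * D 0 0 t (y t) + D 0 2 t (y t) * (D 0 0 t (y t))^2
   + D 0 1 t (y t) * D 1 0 t (y t) + (D 0 1 t (y t))^2 * D 0 0 t (y t)"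
  by (simp add: Y_def tot_def eval_nat_numeral algebra_simps power2_eq_square)

lemma sum4: "(\<Sum>m<4. g m) = g 0 + g 1 + g 2 + g (3::nat)" by (simp add: eval_nat_numeral)
lemma sum5: "(\<Sum>m<5. g m) = g 0 + g 1 + g 2 + g 3 + g (4::nat)" by (simp add: eval_nat_numeral)
lemma fact2: "fact 2 = (2::real)" by (simp add: eval_nat_numeral)
lemma fact3: "fact 3 = (6::real)" by (simp add: eval_nat_numeral)
lemma fact4: "fact 4 = (24::real)" by (simp add: eval_nat_numeral)
lemma fact5: "fact 5 = (120::real)" by (simp add: eval_nat_numeral)

lemma LT: "\<exists>C. \<forall>x e. a \<le> x \<longrightarrow> 0 \<le> e \<longrightarrow> x + e \<le> b \<longrightarrow>
   \<bar>y x + rk3_incr f x (y x) e - y (x+e)\<bar> \<le> C * e^4"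
proof -
  obtain M4 where M4': "\<forall>t\<in>{a..b}. \<bar>Y 4 t\<bar> \<le> M4" using Y_bnd[of 4] by auto
  have M4: "\<And>t. t \<in> {a..b} \<Longrightarrow> \<bar>Y 4 t\<bar> \<le> M4" using M4' by blast
  define H where "H = b - a"
  define c where "c = 1 + MM"
  define Rb where "Rb = MM * (H*c)^3"
  define Gb where "Gb = (3/32)*MM*MM + (9/32)*MM*MM + (15/32)*MM*MM*MM + (9/32)*MM*MM*MM + (3/8)*MM^2*MM*MM + (9/128)*H*MM*MM + (9/128)*H*MM^2*MM + (9/64)*H*MM*MM^2 + (9/128)*H*MM*MM*MM + (9/64)*H*MM*MM*MM*MM + (27/128)*H*MM^2*MM*MM + (9/128)*H*MM^2*MM^2*MM + (9/128)*H*MM^3*MM^2 + (9/256)*H^2*MM*MM*MM + (9/256)*H^2*MM*MM*MM*MM + (9/128)*H^2*MM*MM*MM*MM + (9/128)*H^2*MM^2*MM*MM*MM + (9/256)*H^2*MM^2*MM*MM^2 + (9/256)*H^2*MM^3*MM*MM^2 + (9/2048)*H^3*MM^2*MM + (9/512)*H^3*MM*MM*MM*MM + (9/512)*H^3*MM^2*MM^2*MM + (9/1024)*H^3*MM^2*MM*MM^2 + (9/512)*H^3*MM^3*MM*MM^2 + (9/2048)*H^3*MM^4*MM^3"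
  define Hb where "Hb = (3/4)*MM + (9/32)*H*MM*Rb + (9/16)*H*MM + (9/16)*H*MM*MM + (9/32)*H^2*MM*MM + (9/32)*H^2*MM*MM*MM + (9/128)*H^3*MM*MM + (9/64)*H^3*MM*MM*MM + (9/128)*H^3*MM^2*MM^2"
  have MM0: "0 \<le> MM" using MM(1) by simp
  have c0: "0 \<le> c" using MM0 by (simp add: c_def)
  have H0: "0 \<le> H" using ab by (simp add: H_def)
  have Hb0: "0 \<le> Hb" unfolding Hb_def Rb_def using MM0 H0 c0 by simp
  define C where "C = MM*c^3/3 + 4/9*(MM*c^3 + Gb + H*(MM*c^3*Hb)) + M4/24"
  show ?thesis
  proof (intro exI[of _ C] allI impI)
    fix x e assume x: "a \<le> x" and e: "0 \<le> e" and xe: "x + e \<le> b"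
    have xab: "x \<in> {a..b}" using x xe e by auto
    have eH: "e \<le> H" using x xe by (simp add: H_def)
    define v where "v = y x"
    define F where "F = D 0 0 x v"
    define Fx where "Fx = D 1 0 x v"
    define Fu where "Fu = D 0 1 x v"
    define Fxx where "Fxx = D 2 0 x v"
    define Fxu where "Fxu = D 1 1 x v"
    define Fuu where "Fuu = D 0 2 x v"
    have bF: "\<bar>F\<bar> \<le> MM" "\<bar>Fx\<bar> \<le> MM" "\<bar>Fu\<bar> \<le> MM" "\<bar>Fxx\<bar> \<le> MM" "\<bar>Fxu\<bar> \<le> MM" "\<bar>Fuu\<bar> \<le> MM"
      unfolding F_def Fx_def Fu_def Fxx_def Fxu_def Fuu_def using MM(2) xab by auto
    have Tf_eq: "Tf x v p q = F + p * Fx + q * Fu + (p^2 * Fxx + 2 * p * q * Fxu + q^2 * Fuu) / 2" for p q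
      unfolding Tf_def F_def Fx_def Fu_def Fxx_def Fxu_def Fuu_def by simp
    define f2 where "f2 = D 0 0 (x + e/2) (v + e*F/2)"
    define f3 where "f3 = D 0 0 (x + 3*e/4) (v + 3*(e*f2)/4)"
    have incr: "rk3_incr f x v e = 2/9*(e*F) + 3/9*(e*f2) + 4/9*(e*f3)"
      unfolding rk3_incr_def Let_def f2_def f3_def F_def by (simp add: f_eq)
    define S2 where "S2 = Tf x v (e/2) (e*F/2)"
    define r where "r = f2 - S2"
    have f2eq: "f2 = S2 + r" by (simp add: r_def)
    have ecb: "e/2 + \<bar>e*F/2\<bar> \<le> e*c"
    proof -
      have "e*\<bar>F\<bar> \<le> e*MM" using e bF(1) by (simp add: mult_left_mono)
      moreover have "0 \<le> e*MM" using e MM0 by simp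
      ultimately show ?thesis using e by (simp add: c_def abs_mult algebra_simps)
    qed
    have rb: "\<bar>r\<bar> \<le> MM*(e*c)^3"
    proof -
      have "\<bar>r\<bar> \<le> MM * (e/2 + \<bar>e*F/2\<bar>)^3"
        unfolding r_def f2_def S2_def by (rule T2D) (use x e xe in auto)
      also have "\<dots> \<le> MM*(e*c)^3"
        using ecb e MM0 by (intro mult_left_mono power_mono) auto
      finally show ?thesis .
    qed
    have rRb: "\<bar>r\<bar> \<le> Rb"
    proof -
      have "(e*c)^3 \<le> (H*c)^3" using e eH c0 by (intro power_mono mult_right_mono) auto
      then show ?thesis using rb MM0 unfolding Rb_def by (meson mult_left_mono order_trans)
    qed
    have f2b: "\<bar>f2\<bar> \<le> MM" unfolding f2_def using MM(2)[of 0 0 "x + e/2"] x e xe by auto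
    define T3 where "T3 = Tf x v (3*e/4) (3*(e*f2)/4)"
    have t3: "\<bar>f3 - T3\<bar> \<le> MM*(e*c)^3"
    proof -
      have "\<bar>f3 - T3\<bar> \<le> MM * (3*e/4 + \<bar>3*(e*f2)/4\<bar>)^3"
        unfolding f3_def T3_def by (rule T2D) (use x e xe in auto)
      also have "\<dots> \<le> MM*(e*c)^3"
      proof -
        have "\<bar>3*(e*f2)/4\<bar> \<le> 3*(e*MM)/4" using e f2b by (simp add: abs_mult mult_left_mono)
        then have "3*e/4 + \<bar>3*(e*f2)/4\<bar> \<le> e*c" using e MM0 by (simp add: c_def algebra_simps)
        then show ?thesis using e MM0 by (intro mult_left_mono power_mono) auto
      qed
      finally show ?thesis .
    qed
    define S3 where "S3 = F + e*(3/4*Fx + 3/4*F*Fu) + e^2*(3/8*(Fx*Fu + Fu^2*F) + 9/32*Fxx + 9/16*F*Fxu + 9/32*F^2*Fuu)"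
    define G where "G = (3/32)*Fu*Fxx + (9/32)*Fx*Fxu + (15/32)*F*Fu*Fxu + (9/32)*F*Fx*Fuu + (3/8)*F^2*Fu*Fuu + (9/128)*e*Fxx*Fxu + (9/128)*e*Fx^2*Fuu + (9/64)*e*F*Fxu^2 + (9/128)*e*F*Fxx*Fuu + (9/64)*e*F*Fx*Fu*Fuu + (27/128)*e*F^2*Fxu*Fuu + (9/128)*e*F^2*Fu^2*Fuu + (9/128)*e*F^3*Fuu^2 + (9/256)*e^2*Fx*Fxx*Fuu + (9/256)*e^2*F*Fu*Fxx*Fuu + (9/128)*e^2*F*Fx*Fxu*Fuu + (9/128)*e^2*F^2*Fu*Fxu*Fuu + (9/256)*e^2*F^2*Fx*Fuu^2 + (9/256)*e^2*F^3*Fu*Fuu^2 + (9/2048)*e^3*Fxx^2*Fuu + (9/512)*e^3*F*Fxx*Fxu*Fuu + (9/512)*e^3*F^2*Fxu^2*Fuu + (9/1024)*e^3*F^2*Fxx*Fuu^2 + (9/512)*e^3*F^3*Fxu*Fuu^2 + (9/2048)*e^3*F^4*Fuu^3"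
    define Hh where "Hh = (3/4)*Fu + (9/32)*e*Fuu*r + (9/16)*e*Fxu + (9/16)*e*F*Fuu + (9/32)*e^2*Fx*Fuu + (9/32)*e^2*F*Fu*Fuu + (9/128)*e^3*Fxx*Fuu + (9/64)*e^3*F*Fxu*Fuu + (9/128)*e^3*F^2*Fuu^2"
    have X: "T3 - S3 = e^3*G + e*r*Hh"
      unfolding T3_def f2eq Tf_eq S2_def S3_def G_def Hh_def by (simp add: field_simps power2_eq_square power3_eq_cube power4_eq_xxxx)
    have eb: "\<bar>e\<bar> \<le> H" using e eH by simp
    have Gb: "\<bar>G\<bar> \<le> Gb" unfolding G_def Gb_def
      by (intro bm ba bs bp; (simp add: bF eb rRb)?)
    have Hb: "\<bar>Hh\<bar> \<le> Hb" unfolding Hh_def Hb_def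
      by (intro bm ba bs bp; (simp add: bF eb rRb)?)
    have Yt: "\<bar>y (x+e) - (v + e*F + e^2/2*(Fx + Fu*F) + e^3/6*(Fxx + 2*Fxu*F + Fuu*F^2 + Fu*Fx + Fu^2*F))\<bar> \<le> M4*e^4/24"
    proof -
      have "\<bar>Y 0 (x+e) - (\<Sum>m<4. Y (0+m) x * e^m / fact m)\<bar> \<le> M4 * e^4 / fact 4"
        by (rule taylor_Y[OF x e xe]) (use M4 in auto)
      moreover have "(\<Sum>m<4. Y (0+m) x * e^m / fact m) = v + e*F + e^2/2*(Fx + Fu*F) + e^3/6*(Fxx + 2*Fxu*F + Fuu*F^2 + Fu*Fx + Fu^2*F)"
      proof -
        have y1: "Y 1 x = F" using Y1 by (simp add: F_def v_def f_eq)
        have y2: "Y 2 x = Fx + Fu*F" using Y2 by (simp add: F_def Fx_def Fu_def v_def)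
        have y3: "Y 3 x = Fxx + 2*Fxu*F + Fuu*F^2 + Fu*Fx + Fu^2*F" using Y3
          by (simp add: F_def Fx_def Fu_def Fxx_def Fxu_def Fuu_def v_def algebra_simps)
        have y2': "Y (Suc (Suc 0)) x = Fx + Fu*F" using y2 by (simp add: numeral_2_eq_2)
        have y3': "Y (Suc (Suc (Suc 0))) x = Fxx + 2*Fxu*F + Fuu*F^2 + Fu*Fx + Fu^2*F" using y3 by (simp add: numeral_3_eq_3)
        show ?thesis unfolding sum4 using y1 y2 y3 y2' y3' by (simp add: Y0 v_def fact2 fact3 algebra_simps)
      qed
      ultimately show ?thesis by (simp add: Y0 fact4)
    qed
    have ord: "2/9*F + 3/9*S2 + 4/9*S3 = F + e/2*(Fx + Fu*F) + e^2/6*(Fxx + 2*Fxu*F + Fuu*F^2 + Fu*Fx + Fu^2*F)"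
      unfolding S2_def S3_def Tf_eq by (simp add: field_simps power2_eq_square power3_eq_cube power4_eq_xxxx)
    define Ey where "Ey = y (x+e) - (v + e*F + e^2/2*(Fx + Fu*F) + e^3/6*(Fxx + 2*Fxu*F + Fuu*F^2 + Fu*Fx + Fu^2*F))"
    have Edec: "y x + rk3_incr f x (y x) e - y (x+e) = e/3*r + 4/9*e*((f3 - T3) + (T3 - S3)) - Ey"
    proof -
      have "y x + rk3_incr f x (y x) e - y (x+e) = v + e*(2/9*F + 3/9*S2 + 4/9*S3) + e/3*r + 4/9*e*((f3 - T3) + (T3 - S3)) - y(x+e)"
        unfolding v_def[symmetric] incr f2eq by (simp add: field_simps)
      then show ?thesis unfolding ord Ey_def by (simp add: field_simps power2_eq_square power3_eq_cube)
    qed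
    have "\<bar>e/3*r + 4/9*e*((f3 - T3) + (T3 - S3)) - Ey\<bar> \<le> e/3*\<bar>r\<bar> + 4/9*e*(\<bar>f3 - T3\<bar> + \<bar>T3 - S3\<bar>) + \<bar>Ey\<bar>"
      using e by (intro bs ba bm; simp)
    also have "\<dots> \<le> e/3*(MM*(e*c)^3) + 4/9*e*(MM*(e*c)^3 + (e^3*Gb + e*(MM*(e*c)^3)*Hb)) + M4*e^4/24"
    proof -
      have "\<bar>T3 - S3\<bar> \<le> e^3*Gb + e*(MM*(e*c)^3)*Hb"
      proof -
        have "\<bar>T3 - S3\<bar> \<le> e^3*\<bar>G\<bar> + e*\<bar>r\<bar>*\<bar>Hh\<bar>" unfolding X using e by (simp add: abs_mult order_trans[OF abs_triangle_ineq])
        also have "\<dots> \<le> e^3*Gb + e*(MM*(e*c)^3)*Hb"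
          using e Gb Hb rb by (intro add_mono mult_left_mono mult_mono) auto
        finally show ?thesis .
      qed
      then show ?thesis using rb t3 Yt e unfolding Ey_def by (intro add_mono mult_left_mono) auto
    qed
    also have "\<dots> \<le> C * e^4"
    proof -
      have "e*(MM*(e*c)^3)*Hb = e^4 * (MM*c^3*Hb)" by (simp add: power_mult_distrib algebra_simps eval_nat_numeral)
      also have "\<dots> \<le> e^3 * (H*(MM*c^3*Hb))"
      proof -
        have "e^4 * (MM*c^3*Hb) = e^3 * (e*(MM*c^3*Hb))" by (simp add: eval_nat_numeral)
        also have "\<dots> \<le> e^3 * (H*(MM*c^3*Hb))" using e eH MM0 c0 Hb0 by (intro mult_left_mono mult_right_mono) auto
        finally show ?thesis .
      qed
      finally have 1: "e*(MM*(e*c)^3)*Hb \<le> e^3 * (H*(MM*c^3*Hb))" .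
      have "e/3*(MM*(e*c)^3) + 4/9*e*(MM*(e*c)^3 + (e^3*Gb + e*(MM*(e*c)^3)*Hb)) + M4*e^4/24
          \<le> e/3*(MM*(e*c)^3) + 4/9*e*(MM*(e*c)^3 + (e^3*Gb + e^3 * (H*(MM*c^3*Hb)))) + M4*e^4/24"
        using 1 e by (intro add_mono mult_left_mono order_refl) auto
      also have "\<dots> = C * e^4" unfolding C_def by (simp add: power_mult_distrib algebra_simps eval_nat_numeral)
      finally show ?thesis .
    qed
    finally show "\<bar>y x + rk3_incr f x (y x) e - y (x+e)\<bar> \<le> C * e^4" unfolding Edec .
  qed
qed

end



context rkloc begin

lemma lip_incr:
  assumes x: "a \<le> x" and e: "0 \<le> e" and xe: "x + e \<le> b"
  shows "\<bar>rk3_incr f x w e - rk3_incr f x w' e\<bar> \<le> e * (MM * (1 + (b-a)*MM)^2) * \<bar>w - w'\<bar>"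
proof -
  define d where "d = \<bar>w - w'\<bar>"
  define Q where "Q = (b-a)*MM"
  define E where "E = e*MM"
  have MM0: "0 \<le> MM" using MM(1) by simp
  have d0: "0 \<le> d" by (simp add: d_def)
  have E0: "0 \<le> E" using e MM0 by (simp add: E_def)
  have EQ: "E \<le> Q" unfolding E_def Q_def using x xe MM0 by (intro mult_right_mono) auto
  have xab: "x \<in> {a..b}" "x + e/2 \<in> {a..b}" "x + 3*e/4 \<in> {a..b}" using x e xe by auto
  define k1 where "k1 = e * D 0 0 x w"
  define k1' where "k1' = e * D 0 0 x w'"
  define k2 where "k2 = e * D 0 0 (x + e/2) (w + k1/2)"
  define k2' where "k2' = e * D 0 0 (x + e/2) (w' + k1'/2)"
  define k3 where "k3 = e * D 0 0 (x + 3*e/4) (w + 3*k2/4)"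
  define k3' where "k3' = e * D 0 0 (x + 3*e/4) (w' + 3*k2'/4)"
  have lipe: "\<bar>e * D 0 0 z u - e * D 0 0 z u'\<bar> \<le> E * \<bar>u - u'\<bar>" if "z \<in> {a..b}" for z u u'
  proof -
    have "\<bar>e * D 0 0 z u - e * D 0 0 z u'\<bar> = e * \<bar>D 0 0 z u - D 0 0 z u'\<bar>"
      using e by (simp add: abs_mult right_diff_distrib[symmetric])
    also have "\<dots> \<le> e * (MM * \<bar>u - u'\<bar>)" using lipD[OF that] e by (rule mult_left_mono)
    finally show ?thesis by (simp add: E_def)
  qed
  have l1: "\<bar>k1 - k1'\<bar> \<le> E * d" unfolding k1_def k1'_def d_def by (rule lipe[OF xab(1)])
  have l2: "\<bar>k2 - k2'\<bar> \<le> E * (d + E*d/2)"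
  proof -
    have "\<bar>k2 - k2'\<bar> \<le> E * \<bar>(w + k1/2) - (w' + k1'/2)\<bar>" unfolding k2_def k2'_def by (rule lipe[OF xab(2)])
    also have "\<bar>(w + k1/2) - (w' + k1'/2)\<bar> \<le> d + E*d/2" using l1 unfolding d_def by simp
    then have "E * \<bar>(w + k1/2) - (w' + k1'/2)\<bar> \<le> E * (d + E*d/2)" using E0 by (rule mult_left_mono)
    finally show ?thesis .
  qed
  have l3: "\<bar>k3 - k3'\<bar> \<le> E * (d + 3/4*(E * (d + E*d/2)))"
  proof -
    have "\<bar>k3 - k3'\<bar> \<le> E * \<bar>(w + 3*k2/4) - (w' + 3*k2'/4)\<bar>" unfolding k3_def k3'_def by (rule lipe[OF xab(3)])
    also have "\<bar>(w + 3*k2/4) - (w' + 3*k2'/4)\<bar> \<le> d + 3/4*(E * (d + E*d/2))" using l2 unfolding d_def by simp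
    then have "E * \<bar>(w + 3*k2/4) - (w' + 3*k2'/4)\<bar> \<le> E * (d + 3/4*(E * (d + E*d/2)))" using E0 by (rule mult_left_mono)
    finally show ?thesis .
  qed
  have eq: "rk3_incr f x w e - rk3_incr f x w' e = 2/9*(k1 - k1') + 3/9*(k2 - k2') + 4/9*(k3 - k3')"
    unfolding rk3_incr_def Let_def k1_def k1'_def k2_def k2'_def k3_def k3'_def by (simp add: f_eq algebra_simps)
  have "\<bar>rk3_incr f x w e - rk3_incr f x w' e\<bar> \<le> 2/9*(E*d) + 3/9*(E * (d + E*d/2)) + 4/9*(E * (d + 3/4*(E * (d + E*d/2))))"
    unfolding eq by (intro bm ba; (rule l1 l2 l3 | simp))
  also have "\<dots> = E*d*(1 + E/2 + E^2/6)" by (simp add: field_simps power2_eq_square)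
  also have "\<dots> \<le> E*d*(1 + Q)^2"
  proof -
    have "E^2 \<le> Q^2" using E0 EQ by (intro power_mono) auto
    moreover have "0 \<le> E*E" using E0 by simp
    moreover have r: "(1+Q)*(1+Q) = 1 + 2*Q + Q*Q" by (simp add: algebra_simps)
    ultimately have "1 + E/2 + E^2/6 \<le> (1+Q)^2" using E0 EQ unfolding power2_eq_square r by linarith
    then show ?thesis using E0 d0 by (intro mult_left_mono) auto
  qed
  finally show ?thesis by (simp add: E_def Q_def d_def algebra_simps)
qed

end



context rkloc begin

lemma Ysuc: "Y (Suc 0) = Y 1" "Y (Suc (Suc 0)) = Y 2" "Y (Suc (Suc (Suc 0))) = Y 3" "Y (Suc (Suc (Suc (Suc 0)))) = Y 4"
  by (simp_all add: eval_nat_numeral)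

lemma one_adds: "(1::nat)+0 = 1" "(1::nat)+1 = 2" "(1::nat)+2 = 3" "(1::nat)+3 = 4" by simp_all

lemma QD: "\<exists>C\<ge>0. \<forall>x h. a \<le> x \<longrightarrow> 0 \<le> h \<longrightarrow> x + 3*h \<le> b \<longrightarrow>
   \<bar>y x + 3*h/2 * (f (x + 3*h/2*(1 - 1/sqrt 3)) (y (x + 3*h/2*(1 - 1/sqrt 3)))
        + f (x + 3*h/2*(1 + 1/sqrt 3)) (y (x + 3*h/2*(1 + 1/sqrt 3)))) - y (x + 3*h)\<bar> \<le> C * h^5"
proof -
  obtain M5 where M5': "\<forall>t\<in>{a..b}. \<bar>Y 5 t\<bar> \<le> M5" using Y_bnd[of 5] by auto
  have M5: "\<And>t. t \<in> {a..b} \<Longrightarrow> \<bar>Y 5 t\<bar> \<le> M5" using M5' by blast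
  have M50: "0 \<le> M5" using M5[of a] ab by auto
  define c where "c = 1 / sqrt 3"
  have c2: "c^2 = 1/3" by (simp add: c_def power_divide)
  have c0: "0 \<le> c" "c \<le> 1" by (auto simp: c_def)
  define C where "C = 3/2 * (2 * (M5 * 3^4 / 24)) + M5 * 3^5 / 120"
  show ?thesis
  proof (intro exI[of _ C] conjI allI impI)
    show "0 \<le> C" using M50 by (simp add: C_def)
    fix x h assume x: "a \<le> x" and h: "0 \<le> h" and xh: "x + 3*h \<le> b"
    define s1 where "s1 = 3*h/2*(1 - c)"
    define s2 where "s2 = 3*h/2*(1 + c)"
    have s1b: "0 \<le> s1" "s1 \<le> 3*h"
    proof -
      show "0 \<le> s1" using h c0 by (simp add: s1_def)
      have "3*h/2*(1-c) \<le> 3*h/2*1" using h c0 by (intro mult_left_mono) auto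
      then show "s1 \<le> 3*h" using h by (simp add: s1_def)
    qed
    have s2b: "0 \<le> s2" "s2 \<le> 3*h"
    proof -
      show "0 \<le> s2" using h c0 by (simp add: s2_def)
      have "3*h/2*(1+c) \<le> 3*h/2*2" using h c0 by (intro mult_left_mono) auto
      then show "s2 \<le> 3*h" using h by (simp add: s2_def)
    qed
    define Y0' where "Y0' = Y 0 x"
    define Y1' where "Y1' = Y 1 x"
    define Y2' where "Y2' = Y 2 x"
    define Y3' where "Y3' = Y 3 x"
    define Y4' where "Y4' = Y 4 x"
    have R0: "\<bar>y (x + 3*h) - (Y0' + Y1'*(3*h) + Y2'*(3*h)^2/2 + Y3'*(3*h)^3/6 + Y4'*(3*h)^4/24)\<bar> \<le> M5*(3*h)^5/120"
    proof -
      have "\<bar>Y 0 (x + 3*h) - (\<Sum>m<5. Y (0+m) x * (3*h)^m / fact m)\<bar> \<le> M5 * (3*h)^5 / fact 5"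
        by (rule taylor_Y) (use x h xh M5 in auto)
      then show ?thesis unfolding sum5 add_0_left fact2 fact3 fact4 fact5 by (simp add: Y0 Y0'_def Y1'_def Y2'_def Y3'_def Y4'_def fact2 fact3 fact4 fact5)
    qed
    have R1: "\<bar>Y 1 (x + s) - (Y1' + Y2'* s + Y3'* s^2/2 + Y4'* s^3/6)\<bar> \<le> M5* s^4/24" if s: "0 \<le> s" "s \<le> 3*h" for s
    proof -
      have "\<bar>Y 1 (x + s) - (\<Sum>m<4. Y (1+m) x * s^m / fact m)\<bar> \<le> M5 * s^4 / fact 4"
        by (rule taylor_Y) (use x h xh M5 s in auto)
      then show ?thesis unfolding sum4 one_adds fact2 fact3 fact4 by (simp add: Y1'_def Y2'_def Y3'_def Y4'_def fact2 fact3 fact4)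
    qed
    have p1: "s1 + s2 = 3*h" by (simp add: s1_def s2_def field_simps)
    have p2: "s1^2 + s2^2 = 6*h^2"
    proof -
      have "s1^2 + s2^2 = (3*h/2)^2 * (2 + 2*c^2)" by (simp add: s1_def s2_def field_simps power2_eq_square)
      then show ?thesis unfolding c2 by (simp add: power2_eq_square)
    qed
    have p3: "s1^3 + s2^3 = 27*h^3/2"
    proof -
      have "s1^3 + s2^3 = (3*h/2)^3 * (2 + 6*c^2)" by (simp add: s1_def s2_def field_simps power2_eq_square power3_eq_cube)
      then show ?thesis unfolding c2 by (simp add: power3_eq_cube)
    qed
    have ident: "Y0' + 3*h/2 * ((Y1' + Y2'* s1 + Y3'* s1^2/2 + Y4'* s1^3/6) + (Y1' + Y2'* s2 + Y3'* s2^2/2 + Y4'* s2^3/6))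
       = Y0' + Y1'*(3*h) + Y2'*(3*h)^2/2 + Y3'*(3*h)^3/6 + Y4'*(3*h)^4/24"
    proof -
      have "Y0' + 3*h/2 * ((Y1' + Y2'* s1 + Y3'* s1^2/2 + Y4'* s1^3/6) + (Y1' + Y2'* s2 + Y3'* s2^2/2 + Y4'* s2^3/6))
        = Y0' + 3*h/2 * (2*Y1' + Y2'*(s1+s2) + Y3'*(s1^2+s2^2)/2 + Y4'*(s1^3+s2^3)/6)" by (simp add: field_simps)
      also have "\<dots> = Y0' + Y1'*(3*h) + Y2'*(3*h)^2/2 + Y3'*(3*h)^3/6 + Y4'*(3*h)^4/24"
        unfolding p1 p2 p3 by (simp add: field_simps power2_eq_square power3_eq_cube power4_eq_xxxx)
      finally show ?thesis .
    qed
    define A1 where "A1 = Y 1 (x + s1) - (Y1' + Y2'* s1 + Y3'* s1^2/2 + Y4'* s1^3/6)"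
    define A2 where "A2 = Y 1 (x + s2) - (Y1' + Y2'* s2 + Y3'* s2^2/2 + Y4'* s2^3/6)"
    define A0 where "A0 = y (x + 3*h) - (Y0' + Y1'*(3*h) + Y2'*(3*h)^2/2 + Y3'*(3*h)^3/6 + Y4'*(3*h)^4/24)"
    have eq: "y x + 3*h/2 * (f (x + s1) (y (x + s1)) + f (x + s2) (y (x + s2))) - y (x + 3*h) = 3*h/2*(A1 + A2) - A0"
    proof -
      have "y x + 3*h/2 * (f (x + s1) (y (x + s1)) + f (x + s2) (y (x + s2))) - y (x + 3*h)
         = Y0' + 3*h/2 * ((Y1' + Y2'* s1 + Y3'* s1^2/2 + Y4'* s1^3/6) + (Y1' + Y2'* s2 + Y3'* s2^2/2 + Y4'* s2^3/6)) + 3*h/2*(A1 + A2) - y (x + 3*h)"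
        unfolding A1_def A2_def using Y1 by (simp add: Y0 Y0'_def algebra_simps)
      then show ?thesis unfolding ident A0_def by simp
    qed
    have b4: "M5* s^4/24 \<le> M5*(3*h)^4/24" if "0 \<le> s" "s \<le> 3*h" for s
      using that M50 by (intro divide_right_mono mult_left_mono power_mono) auto
    have "\<bar>3*h/2*(A1 + A2) - A0\<bar> \<le> 3*h/2*(M5*(3*h)^4/24 + M5*(3*h)^4/24) + M5*(3*h)^5/120"
    proof -
      have "\<bar>A1\<bar> \<le> M5*(3*h)^4/24" unfolding A1_def using R1[OF s1b] b4[OF s1b] by linarith
      moreover have "\<bar>A2\<bar> \<le> M5*(3*h)^4/24" unfolding A2_def using R1[OF s2b] b4[OF s2b] by linarith
      moreover have "\<bar>A0\<bar> \<le> M5*(3*h)^5/120" unfolding A0_def using R0 by linarith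
      ultimately show ?thesis using h by (intro bs bm ba; simp)
    qed
    also have "\<dots> = C * h^5" by (simp add: C_def power_mult_distrib algebra_simps eval_nat_numeral)
    finally show "\<bar>y x + 3*h/2 * (f (x + 3*h/2*(1 - 1/sqrt 3)) (y (x + 3*h/2*(1 - 1/sqrt 3)))
        + f (x + 3*h/2*(1 + 1/sqrt 3)) (y (x + 3*h/2*(1 + 1/sqrt 3)))) - y (x + 3*h)\<bar> \<le> C * h^5"
      using eq unfolding s1_def s2_def c_def by simp
  qed
qed

end



context rkloc begin

lemma block: "\<exists>K C. 0 \<le> K \<and> 0 \<le> C \<and> (\<forall>x h w. a \<le> x \<longrightarrow> 0 \<le> h \<longrightarrow> x + 3*h \<le> b \<longrightarrow>
   \<bar>rk3gl2_block f h x w - y (x + 3*h)\<bar> \<le> (1 + K*h)*\<bar>w - y x\<bar> + C*h^5)"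
proof -
  obtain C1 where C1: "\<And>x e. a \<le> x \<Longrightarrow> 0 \<le> e \<Longrightarrow> x + e \<le> b \<Longrightarrow>
     \<bar>y x + rk3_incr f x (y x) e - y (x+e)\<bar> \<le> C1 * e^4" using LT by blast
  obtain C2 where C20: "0 \<le> C2" and C2: "\<And>x h. a \<le> x \<Longrightarrow> 0 \<le> h \<Longrightarrow> x + 3*h \<le> b \<Longrightarrow>
   \<bar>y x + 3*h/2 * (f (x + 3*h/2*(1 - 1/sqrt 3)) (y (x + 3*h/2*(1 - 1/sqrt 3)))
        + f (x + 3*h/2*(1 + 1/sqrt 3)) (y (x + 3*h/2*(1 + 1/sqrt 3)))) - y (x + 3*h)\<bar> \<le> C2 * h^5"
    using QD by blast
  define C1' where "C1' = \<bar>C1\<bar>"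
  define H where "H = b - a"
  define KL where "KL = MM * (1 + (b-a)*MM)^2"
  define A where "A = 1 + 3*H*KL"
  define K where "K = 3/2*MM*(A + A^2)"
  define C where "C = 3/2*MM*(A+2)*(81*C1') + C2"
  have MM0: "0 \<le> MM" using MM(1) by simp
  have H0: "0 \<le> H" using ab by (simp add: H_def)
  have KL0: "0 \<le> KL" using MM0 by (simp add: KL_def)
  have A1: "1 \<le> A" using H0 KL0 by (simp add: A_def)
  have C1'0: "0 \<le> C1'" by (simp add: C1'_def)
  show ?thesis
  proof (rule exI[of _ K], rule exI[of _ C], intro conjI allI impI)
    show "0 \<le> K" using MM0 A1 by (simp add: K_def)
    show "0 \<le> C" using MM0 A1 C1'0 C20 by (simp add: C_def)
    fix x h w assume x: "a \<le> x" and h: "0 \<le> h" and xh: "x + 3*h \<le> b"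
    have hH: "3*h \<le> H" using x xh by (simp add: H_def)
    have stage: "\<bar>u + rk3_incr f z u e - y (z+e)\<bar> \<le> A*\<bar>u - y z\<bar> + 81*C1'*h^4"
      if z: "a \<le> z" and e: "0 \<le> e" "e \<le> 3*h" and ze: "z + e \<le> b" for z e u
    proof -
      have "u + rk3_incr f z u e - y (z+e) = (u - y z) + (rk3_incr f z u e - rk3_incr f z (y z) e)
          + (y z + rk3_incr f z (y z) e - y (z+e))" by simp
      then have "\<bar>u + rk3_incr f z u e - y (z+e)\<bar> \<le> \<bar>u - y z\<bar> + \<bar>rk3_incr f z u e - rk3_incr f z (y z) e\<bar>
          + \<bar>y z + rk3_incr f z (y z) e - y (z+e)\<bar>" by linarith
      also have "\<dots> \<le> \<bar>u - y z\<bar> + e * KL * \<bar>u - y z\<bar> + C1' * e^4"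
      proof (intro add_mono order_refl)
        show "\<bar>rk3_incr f z u e - rk3_incr f z (y z) e\<bar> \<le> e * KL * \<bar>u - y z\<bar>"
          unfolding KL_def by (rule lip_incr[OF z e(1) ze])
        have "C1 * e^4 \<le> C1' * e^4" unfolding C1'_def using e by (intro mult_right_mono) auto
        then show "\<bar>y z + rk3_incr f z (y z) e - y (z+e)\<bar> \<le> C1' * e^4" using C1[OF z e(1) ze] by linarith
      qed
      also have "\<dots> \<le> A*\<bar>u - y z\<bar> + 81*C1'*h^4"
      proof -
        have "e * KL \<le> 3*H*KL" using e hH KL0 by (intro mult_right_mono) auto
        then have "e * KL * \<bar>u - y z\<bar> \<le> 3*H*KL * \<bar>u - y z\<bar>" by (rule mult_right_mono) auto
        moreover have "C1' * e^4 \<le> C1' * (3*h)^4" using e C1'0 by (intro mult_left_mono power_mono) auto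
        ultimately show ?thesis by (simp add: A_def algebra_simps power_mult_distrib)
      qed
      finally show ?thesis .
    qed
    define c where "c = 1 / sqrt 3"
    have c0: "0 \<le> c" "c \<le> 1" by (auto simp: c_def)
    define x1 where "x1 = x + 3*h/2*(1 - c)"
    define x2 where "x2 = x + 3*h/2*(1 + c)"
    define e1 where "e1 = x1 - x"
    define e2 where "e2 = x2 - x1"
    have e1b: "0 \<le> e1" "e1 \<le> 3*h"
    proof -
      show "0 \<le> e1" using h c0 by (simp add: e1_def x1_def)
      have "3*h/2*(1-c) \<le> 3*h/2*1" using h c0 by (intro mult_left_mono) auto
      then show "e1 \<le> 3*h" using h by (simp add: e1_def x1_def)
    qed
    have e2b: "0 \<le> e2" "e2 \<le> 3*h"
    proof -
      have "e2 = 3*h*c" by (simp add: e2_def x1_def x2_def field_simps)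
      moreover have "3*h*c \<le> 3*h*1" using h c0 by (intro mult_left_mono) auto
      ultimately show "0 \<le> e2" "e2 \<le> 3*h" using h c0 by auto
    qed
    have x1a: "a \<le> x1" using x e1b unfolding e1_def by simp
    have x2le: "x2 \<le> x + 3*h"
    proof -
      have "3*h/2*(1+c) \<le> 3*h/2*2" using h c0 by (intro mult_left_mono) auto
      then show ?thesis by (simp add: x2_def)
    qed
    have x2b: "x1 + e2 \<le> b" "x + e1 \<le> b" using xh e2b x2le unfolding e2_def e1_def by auto
    have x1ab: "x1 \<in> {a..b}" "x2 \<in> {a..b}" using x1a x2b e2b by (auto simp: e2_def)
    define w1 where "w1 = w + rk3_incr f x w e1"
    define w2 where "w2 = w1 + rk3_incr f x1 w1 e2"
    define \<Delta> where "\<Delta> = \<bar>w - y x\<bar>"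
    have err1: "\<bar>w1 - y x1\<bar> \<le> A*\<Delta> + 81*C1'*h^4"
      using stage[OF x e1b x2b(2), of w] unfolding w1_def \<Delta>_def e1_def by simp
    have err2: "\<bar>w2 - y x2\<bar> \<le> A*\<bar>w1 - y x1\<bar> + 81*C1'*h^4"
      using stage[OF x1a e2b x2b(1), of w1] unfolding w2_def e2_def by simp
    have blk: "rk3gl2_block f h x w = w + 3*h/2 * (f x1 w1 + f x2 w2)"
      unfolding rk3gl2_block_def Let_def w1_def w2_def e1_def e2_def x1_def x2_def c_def by simp
    define Q where "Q = y x + 3*h/2 * (f x1 (y x1) + f x2 (y x2)) - y (x + 3*h)"
    have Qb: "\<bar>Q\<bar> \<le> C2 * h^5" unfolding Q_def x1_def x2_def c_def using C2[OF x h xh] by simp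
    have lf: "\<bar>f z u - f z u'\<bar> \<le> MM * \<bar>u - u'\<bar>" if "z \<in> {a..b}" for z u u'
      using lipD[OF that] by (simp add: f_eq)
    have eqb: "rk3gl2_block f h x w - y (x + 3*h) = (w - y x) + 3*h/2 * ((f x1 w1 - f x1 (y x1)) + (f x2 w2 - f x2 (y x2))) + Q"
      unfolding blk Q_def by (simp add: algebra_simps)
    have "\<bar>rk3gl2_block f h x w - y (x + 3*h)\<bar> \<le> \<Delta> + 3*h/2 * ((MM*\<bar>w1 - y x1\<bar>) + (MM*\<bar>w2 - y x2\<bar>)) + C2*h^5"
      unfolding \<Delta>_def eqb using h lf[OF x1ab(1), of w1 "y x1"] lf[OF x1ab(2), of w2 "y x2"] Qb
      by (intro ba bm; simp)
    also have "\<dots> \<le> \<Delta> + 3*h/2 * ((MM*(A*\<Delta> + 81*C1'*h^4)) + (MM*(A*(A*\<Delta> + 81*C1'*h^4) + 81*C1'*h^4))) + C2*h^5"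
    proof -
      have "\<bar>w2 - y x2\<bar> \<le> A*(A*\<Delta> + 81*C1'*h^4) + 81*C1'*h^4"
        using err2 err1 A1 by (meson add_mono_thms_linordered_semiring(3) dual_order.trans mult_left_mono zero_le_one order_trans)
      then show ?thesis using err1 h MM0 by (intro add_mono mult_left_mono order_refl) auto
    qed
    also have "\<dots> = (1 + K*h)*\<Delta> + C*h^5" unfolding K_def C_def by (simp add: field_simps power2_eq_square eval_nat_numeral)
    finally show "\<bar>rk3gl2_block f h x w - y (x + 3*h)\<bar> \<le> (1 + K*h)*\<bar>w - y x\<bar> + C*h^5" unfolding \<Delta>_def .
  qed
qed

end



context rkloc begin

lemma glob: "\<exists>C. \<forall>N::nat. N \<ge> 1 \<longrightarrow>
           \<bar>rk3gl2 f a ((b - a) / (3 * real N)) (y a) N - y b\<bar>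
             \<le> C * ((b - a) / (3 * real N)) ^ 4"
proof -
  obtain K C where K0: "0 \<le> K" and C0: "0 \<le> C" and B: "\<And>x h w. a \<le> x \<Longrightarrow> 0 \<le> h \<Longrightarrow> x + 3*h \<le> b \<Longrightarrow>
   \<bar>rk3gl2_block f h x w - y (x + 3*h)\<bar> \<le> (1 + K*h)*\<bar>w - y x\<bar> + C*h^5" using block by blast
  show ?thesis
  proof (intro exI[of _ "(b-a)/3 * C * exp (K*(b-a)/3)"] allI impI)
    fix N :: nat assume N: "N \<ge> 1"
    define h where "h = (b - a) / (3 * real N)"
    have h0: "0 \<le> h" using ab N by (simp add: h_def)
    have Nh: "3 * real N * h = b - a" using N by (simp add: h_def)
    have Nh': "real N * h = (b-a)/3" using Nh by simp
    have q0: "1 \<le> 1 + K*h" using K0 h0 by simp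
    have ind: "\<bar>rk3gl2 f a h (y a) k - y (a + 3*real k*h)\<bar> \<le> real k * C * h^5 * (1+K*h)^k" if "k \<le> N" for k
      using that
    proof (induction k)
      case 0 then show ?case by simp
    next
      case (Suc k)
      then have IH: "\<bar>rk3gl2 f a h (y a) k - y (a + 3*real k*h)\<bar> \<le> real k * C * h^5 * (1+K*h)^k" by simp
      have xa: "a \<le> a + 3*real k*h" using h0 by simp
      have xb: "a + 3*real k*h + 3*h \<le> b"
      proof -
        have "3*real (Suc k)*h \<le> 3*real N*h" using Suc.prems h0 by (intro mult_right_mono) auto
        then show ?thesis using Nh by (simp add: algebra_simps)
      qed
      have eqy: "a + 3 * real (Suc k) * h = a + 3*real k*h + 3*h" by (simp add: algebra_simps)
      have "\<bar>rk3gl2 f a h (y a) (Suc k) - y (a + 3*real (Suc k)*h)\<bar>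
          = \<bar>rk3gl2_block f h (a + 3*real k*h) (rk3gl2 f a h (y a) k) - y (a + 3*real k*h + 3*h)\<bar>"
        by (simp only: rk3gl2.simps eqy)
      also have "\<dots> \<le> (1 + K*h) * \<bar>rk3gl2 f a h (y a) k - y (a + 3*real k*h)\<bar> + C*h^5"
        by (rule B[OF xa h0 xb])
      also have "\<dots> \<le> (1 + K*h) * (real k * C * h^5 * (1+K*h)^k) + C*h^5*(1+K*h)^(Suc k)"
      proof (intro add_mono mult_left_mono IH)
        have "1 \<le> (1+K*h)^(Suc k)" using q0 by (rule one_le_power)
        then have "C*h^5*1 \<le> C*h^5*(1+K*h)^(Suc k)" using C0 h0 by (intro mult_left_mono) auto
        then show "C*h^5 \<le> C*h^5*(1+K*h)^(Suc k)" by simp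
      qed (use q0 in auto)
      also have "\<dots> = real (Suc k) * C * h^5 * (1+K*h)^(Suc k)" by (simp add: algebra_simps)
      finally show ?case .
    qed
    have "a + 3*real N*h = b" using Nh by simp
    then have "\<bar>rk3gl2 f a h (y a) N - y b\<bar> \<le> real N * C * h^5 * (1+K*h)^N" using ind[of N] by simp
    also have "\<dots> = (real N * h) * C * (1+K*h)^N * h^4" by (simp add: eval_nat_numeral)
    also have "\<dots> \<le> (real N * h) * C * exp (K*(b-a)/3) * h^4"
    proof -
      have "(1+K*h)^N \<le> (exp (K*h))^N" using q0 by (intro power_mono) (auto simp: add.commute exp_ge_add_one_self)
      also have "\<dots> = exp (real N * (K*h))" by (simp add: exp_of_nat_mult)
      also have "real N * (K*h) = K * (real N * h)" by (simp add: algebra_simps)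
      also have "real N * h = (b-a)/3" using Nh by simp
      also have "K * ((b-a)/3) = K*(b-a)/3" by simp
      finally show ?thesis using h0 C0 by (intro mult_right_mono mult_left_mono) auto
    qed
    also have "\<dots> = (b-a)/3 * C * exp (K*(b-a)/3) * h^4" by (simp only: Nh')
    finally show "\<bar>rk3gl2 f a ((b - a) / (3 * real N)) (y a) N - y b\<bar> \<le> (b-a)/3 * C * exp (K*(b-a)/3) * ((b - a) / (3 * real N)) ^ 4"
      unfolding h_def .
  qed
qed

end

theorem mainTheorem2:
  fixes f :: "real \<Rightarrow> real \<Rightarrow> real" and y :: "real \<Rightarrow> real" and a b :: real
    and D :: "nat \<Rightarrow> nat \<Rightarrow> real \<Rightarrow> real \<Rightarrow> real"
  assumes ab: "a < b"
    and D00: "\<And>x u. D 0 0 x u = f x u"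
    and Dx: "\<And>i j x u. i + j < 4 \<Longrightarrow> x \<in> {a..b} \<Longrightarrow>
               ((\<lambda>t. D i j t u) has_real_derivative D (Suc i) j x u) (at x within {a..b})"
    and Du: "\<And>i j x u. i + j < 4 \<Longrightarrow> x \<in> {a..b} \<Longrightarrow>
               ((\<lambda>s. D i j x s) has_real_derivative D i (Suc j) x u) (at u)"
    and Dcont: "\<And>i j. i + j \<le> 4 \<Longrightarrow>
               continuous_on ({a..b} \<times> UNIV) (\<lambda>p. D i j (fst p) (snd p))"
    and Dbdd: "\<And>i j. i + j \<le> 4 \<Longrightarrow> \<exists>M. \<forall>x\<in>{a..b}. \<forall>u. \<bar>D i j x u\<bar> \<le> M"
    and sol: "\<And>x. x \<in> {a..b} \<Longrightarrow> (y has_real_derivative f x (y x)) (at x within {a..b})"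
  shows "\<exists>C. \<forall>N::nat. N \<ge> 1 \<longrightarrow>
           \<bar>rk3gl2 f a ((b - a) / (3 * real N)) (y a) N - y b\<bar>
             \<le> C * ((b - a) / (3 * real N)) ^ 4"
proof -
  interpret rkloc f y a b D
    by (unfold_locales; fact assms)
  show ?thesis by (rule glob)
qed



end
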